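(* Let $(\Omega,\mathcal{F})$ be a measurable space, $\mathrm{B}_b$ the space of bounded real-valued measurable functions, $\mathbb{P}$ a probability measure on $(\Omega,\mathcal{F})$, and $H\colon\mathrm{B}_b\to\mathbb{R}$ a premium principle that is dominated by $\mathbb{P}$, i.e. $H(X)=H(Y)$ for all $X,Y\in\mathrm{B}_b$ with $X=Y$ $\mathbb{P}$-a.s. Then $R_{\mathrm{Max}}(X):=\inf\{H(X_0)\mid X_0\in\mathrm{B}_b,\ X_0\ge X\}$, $X\in\mathrm{B}_b$, is dominated by $\mathbb{P}$.
   Context: A premium principle is a map $H\colon\mathrm{B}_b\to\mathbb{R}$ with $H(X+m)=H(X)+m$ for $m\in\mathbb{R}$, $H(0)=0$, and $H(X)\ge0$ for $X\ge0$, where $\le$ is the pointwise order. *)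

theory Defs
  imports "HOL-Probability.Probability"
begin

definition Bb :: "'a measure \<Rightarrow> ('a \<Rightarrow> real) set" where
  "Bb M = {X. X \<in> borel_measurable M \<and> bounded (X ` space M)}"

definition premium_principle :: "'a measure \<Rightarrow> (('a \<Rightarrow> real) \<Rightarrow> real) \<Rightarrow> bool" where
  "premium_principle M H \<longleftrightarrow>
     (\<forall>X\<in>Bb M. \<forall>m::real. H (\<lambda>\<omega>. X \<omega> + m) = H X + m)
   \<and> H (\<lambda>_. 0) = 0
   \<and> (\<forall>X\<in>Bb M. (\<forall>\<omega>\<in>space M. X \<omega> \<ge> 0) \<longrightarrow> H X \<ge> 0)"

definition dominated_by :: "'a measure \<Rightarrow> 'a measure \<Rightarrow> (('a \<Rightarrow> real) \<Rightarrow> 'b) \<Rightarrow> bool" where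
  "dominated_by M P F \<longleftrightarrow>
     (\<forall>X\<in>Bb M. \<forall>Y\<in>Bb M. (AE \<omega> in P. X \<omega> = Y \<omega>) \<longrightarrow> F X = F Y)"

text \<open>R_Max, valued in the extended reals (the infimum may be -\<infinity>).\<close>
definition R_Max :: "'a measure \<Rightarrow> (('a \<Rightarrow> real) \<Rightarrow> real) \<Rightarrow> ('a \<Rightarrow> real) \<Rightarrow> ereal" where
  "R_Max M H X = Inf {ereal (H X0) | X0. X0 \<in> Bb M \<and> (\<forall>\<omega>\<in>space M. X \<omega> \<le> X0 \<omega>)}"

end

theory Submission
  imports Defs
begin

lemma max_Bb:
  assumes "X \<in> Bb M" "Z \<in> Bb M"
  shows "(\<lambda>w. max (Z w) (X w)) \<in> Bb M"
proof -
  have m: "(\<lambda>w. max (Z w) (X w)) \<in> borel_measurable M"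
    using assms by (auto simp: Bb_def)
  obtain a where a: "\<forall>w\<in>space M. \<bar>X w\<bar> \<le> a"
    using assms(1) unfolding Bb_def bounded_iff by (auto simp: real_norm_def)
  obtain b where b: "\<forall>w\<in>space M. \<bar>Z w\<bar> \<le> b"
    using assms(2) unfolding Bb_def bounded_iff by (auto simp: real_norm_def)
  have "bounded ((\<lambda>w. max (Z w) (X w)) ` space M)"
    unfolding bounded_iff
    by (rule exI[of _ "max a b"]) (use a b in \<open>fastforce simp: real_norm_def\<close>)
  with m show ?thesis by (simp add: Bb_def)
qed

lemma one_side:
  assumes sP: "sets P = sets M" and dom: "dominated_by M P H"
    and X: "X \<in> Bb M" and Y: "Y \<in> Bb M" and ae: "AE w in P. X w = Y w"
  shows "R_Max M H X \<le> R_Max M H Y"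
  unfolding R_Max_def
proof (rule Inf_greatest)
  fix v assume "v \<in> {ereal (H X0) |X0. X0 \<in> Bb M \<and> (\<forall>\<omega>\<in>space M. Y \<omega> \<le> X0 \<omega>)}"
  then obtain X0 where v: "v = ereal (H X0)" and X0: "X0 \<in> Bb M"
    and le: "\<forall>\<omega>\<in>space M. Y \<omega> \<le> X0 \<omega>" by blast
  define Z where "Z = (\<lambda>w. max (X0 w) (X w))"
  have Z: "Z \<in> Bb M" unfolding Z_def using max_Bb[OF X X0] .
  have sp: "space P = space M" using sP by (rule sets_eq_imp_space_eq)
  have "AE w in P. Z w = X0 w"
    using ae AE_space[of P] by eventually_elim (use le sp in \<open>auto simp: Z_def\<close>)
  hence "H Z = H X0" using dom Z X0 unfolding dominated_by_def by blast
  moreover have "\<forall>\<omega>\<in>space M. X \<omega> \<le> Z \<omega>" by (simp add: Z_def)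
  ultimately have "v \<in> {ereal (H X0) |X0. X0 \<in> Bb M \<and> (\<forall>\<omega>\<in>space M. X \<omega> \<le> X0 \<omega>)}"
    using Z v by (intro CollectI exI[of _ Z]) simp
  thus "Inf {ereal (H X0) |X0. X0 \<in> Bb M \<and> (\<forall>\<omega>\<in>space M. X \<omega> \<le> X0 \<omega>)} \<le> v"
    by (rule Inf_lower)
qed

theorem proposition4p1:
  fixes M P :: "'a measure" and H :: "('a \<Rightarrow> real) \<Rightarrow> real"
  assumes "prob_space P" and "sets P = sets M"
    and "premium_principle M H"
    and "dominated_by M P H"
  shows "dominated_by M P (R_Max M H)"
  unfolding dominated_by_def
proof (intro ballI impI)
  fix X Y assume X: "X \<in> Bb M" and Y: "Y \<in> Bb M" and ae: "AE w in P. X w = Y w"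
  have ae2: "AE w in P. Y w = X w" using ae by auto
  show "R_Max M H X = R_Max M H Y"
    using one_side[OF assms(2,4) X Y ae] one_side[OF assms(2,4) Y X ae2] by simp
qed

end
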